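(* Let $Y^1,\dots,Y^M$ be i.i.d. $\mathbb{R}^d$-valued random variables with law $\mu$, where $\mu$ has density $m$. Assume there exist $\alpha>0$, $\kappa\ge1$ and a probability measure $\gamma(dx)=q(x)dx$ on $\mathbb{R}^d$ satisfying a logarithmic Sobolev inequality with constant $\alpha$ and such that $m(x)\le\kappa q(x)$ for all $x\in\mathbb{R}^d$. Then for every Lipschitz continuous $f:\mathbb{R}^d\to\mathbb{R}$ with $|\nabla f|_\infty\le1$, $$\forall r>0,\ M\ge1,\quad\mathbb{P}\left[\left|\frac1M\sum_{k=1}^Mf(Y^k)-\mathbb{E}[f(Y^1)]\right|\ge r+\delta_{\kappa,\alpha}\right]\le2e^{-M\frac{r^2}{\alpha}},$$ with $\delta_{\kappa,\alpha}=2\sqrt{\alpha\log\kappa}$.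
   Context: $\gamma$ satisfies a logarithmic Sobolev inequality with constant $\alpha$ if for all $f\in H^1(d\gamma)=\{g\in L^2(d\gamma):\int|\nabla g|^2d\gamma<\infty\}$ with $f\ge0$, $\mathrm{Ent}_\gamma(f^2)\le\alpha\int|\nabla f|^2d\gamma$, where $\mathrm{Ent}_\gamma(\phi)=\int\phi\log\phi\,d\gamma-(\int\phi\,d\gamma)\log(\int\phi\,d\gamma)$. $|\nabla f|_\infty$ is the essential supremum of the Euclidean norm of the gradient. *)

theory Defs
  imports "HOL-Analysis.Analysis" "HOL-Probability.Probability"
begin

text \<open>Classical gradient of a real function on a Euclidean space; set to 0 at points
  of non-differentiability (these form a Lebesgue-null set for the locally Lipschitz
  functions considered below, by Rademacher's theorem).\<close>
definition grad :: "('a::euclidean_space \<Rightarrow> real) \<Rightarrow> 'a \<Rightarrow> 'a" where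
  "grad f x = (if f differentiable (at x)
               then (SOME g. (f has_derivative (\<lambda>h. g \<bullet> h)) (at x)) else 0)"

definition grad_sup_norm :: "('a::euclidean_space \<Rightarrow> real) \<Rightarrow> ereal" where
  "grad_sup_norm f = esssup lborel (\<lambda>x. ereal (norm (grad f x)))"

definition Ent :: "'a measure \<Rightarrow> ('a \<Rightarrow> real) \<Rightarrow> real" where
  "Ent \<gamma> \<phi> = (\<integral>x. \<phi> x * ln (\<phi> x) \<partial>\<gamma>)
               - (\<integral>x. \<phi> x \<partial>\<gamma>) * ln (\<integral>x. \<phi> x \<partial>\<gamma>)"

text \<open>The class H^1(d gamma) realised through locally Lipschitz functions with classical
  (a.e.) gradients: f in L^2(gamma) and |grad f| in L^2(gamma).\<close>
definition H1 :: "'a::euclidean_space measure \<Rightarrow> ('a \<Rightarrow> real) set" where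
  "H1 \<gamma> = {g. (\<forall>x. \<exists>e>0. \<exists>L. L-lipschitz_on (ball x e) g)
              \<and> integrable \<gamma> (\<lambda>x. (g x)\<^sup>2)
              \<and> integrable \<gamma> (\<lambda>x. (norm (grad g x))\<^sup>2)}"

definition LSI :: "'a::euclidean_space measure \<Rightarrow> real \<Rightarrow> bool" where
  "LSI \<gamma> \<alpha> \<longleftrightarrow> (\<forall>f \<in> H1 \<gamma>. (\<forall>x. f x \<ge> 0) \<longrightarrow>
      integrable \<gamma> (\<lambda>x. (f x)\<^sup>2 * ln ((f x)\<^sup>2)) \<and>
      Ent \<gamma> (\<lambda>x. (f x)\<^sup>2) \<le> \<alpha> * (\<integral>x. (norm (grad f x))\<^sup>2 \<partial>\<gamma>))"

end

theory Submission
  imports Defs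
begin

lemma grad_intro:
  fixes f :: "'a::euclidean_space \<Rightarrow> real"
  assumes "(f has_derivative (\<lambda>v. w \<bullet> v)) (at x)" shows "grad f x = w"
proof -
  have d: "f differentiable (at x)" using assms by (auto simp: differentiable_def)
  let ?g = "SOME g. (f has_derivative (\<lambda>h. g \<bullet> h)) (at x)"
  have "(f has_derivative (\<lambda>h. ?g \<bullet> h)) (at x)" by (rule someI[of _ w]) (rule assms)
  then have "(\<lambda>h. ?g \<bullet> h) = (\<lambda>h. w \<bullet> h)" using has_derivative_unique assms by blast
  then have "?g \<bullet> (?g - w) = w \<bullet> (?g - w)" by metis
  then have "(?g - w) \<bullet> (?g - w) = 0" by (simp add: inner_diff_left)
  then have "?g = w" by simp
  thus ?thesis using d by (simp add: grad_def)
qed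

lemma grad_works:
  fixes f :: "'a::euclidean_space \<Rightarrow> real"
  assumes "f differentiable (at x)"
  shows "(f has_derivative (\<lambda>v. grad f x \<bullet> v)) (at x)"
proof -
  from assms obtain D where D: "(f has_derivative D) (at x)" by (auto simp: differentiable_def)
  then have lin: "linear D" using has_derivative_linear by blast
  define w where "w = (\<Sum>b\<in>Basis. D b *\<^sub>R b)"
  have "D v = w \<bullet> v" for v
  proof -
    have "D v = D (\<Sum>b\<in>Basis. (v \<bullet> b) *\<^sub>R b)" by (simp add: euclidean_representation)
    also have "\<dots> = (\<Sum>b\<in>Basis. (v \<bullet> b) * D b)" using lin by (simp add: linear_sum linear_scale)
    also have "\<dots> = w \<bullet> v" by (simp add: w_def inner_sum_right inner_commute mult.commute)
    finally show ?thesis .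
  qed
  then have "D = (\<lambda>v. w \<bullet> v)" by auto
  with D have "(f has_derivative (\<lambda>v. w \<bullet> v)) (at x)" by simp
  moreover then have "grad f x = w" by (rule grad_intro)
  ultimately show ?thesis by simp
qed

lemma grad_nondiff:
  "\<not> f differentiable (at x) \<Longrightarrow> grad f x = 0"
  by (simp add: grad_def)

lemma grad_exp_comp:
  fixes h :: "'a::euclidean_space \<Rightarrow> real"
  assumes "c \<noteq> 0"
  shows "grad (\<lambda>x. exp (c * h x)) x = (c * exp (c * h x)) *\<^sub>R grad h x"
proof (cases "h differentiable (at x)")
  case True
  have "((\<lambda>x. exp (c * h x)) has_derivative (\<lambda>v. exp (c * h x) * (c * (grad h x \<bullet> v)))) (at x)"
    using grad_works[OF True] by (auto intro!: derivative_eq_intros)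
  also have "(\<lambda>v. exp (c * h x) * (c * (grad h x \<bullet> v))) = (\<lambda>v. ((c * exp (c * h x)) *\<^sub>R grad h x) \<bullet> v)"
    by (auto simp: algebra_simps)
  finally show ?thesis by (rule grad_intro)
next
  case False
  have "\<not> (\<lambda>x. exp (c * h x)) differentiable (at x)"
  proof
    assume d: "(\<lambda>x. exp (c * h x)) differentiable (at x)"
    then obtain D where D: "((\<lambda>x. exp (c * h x)) has_derivative D) (at x)" by (auto simp: differentiable_def)
    have L: "((\<lambda>y. ln (exp (c * h y))) has_derivative (\<lambda>v. D v * inverse (exp (c * h x)))) (at x)"
      by (rule DERIV_compose_FDERIV[OF DERIV_ln[OF exp_gt_zero] D])
    then have "((\<lambda>y. c * h y) has_derivative (\<lambda>v. D v * inverse (exp (c * h x)))) (at x)" by simp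
    then have "((\<lambda>y. (1/c) * (c * h y)) has_derivative (\<lambda>v. (1/c) * (D v * inverse (exp (c * h x))))) (at x)"
      by (rule has_derivative_mult_right)
    then have "(h has_derivative (\<lambda>v. (1/c) * (D v * inverse (exp (c * h x))))) (at x)" using assms by simp
    then show False using False by (auto simp: differentiable_def)
  qed
  then show ?thesis using False by (simp add: grad_nondiff)
qed

lemma grad_uminus:
  fixes h :: "'a::euclidean_space \<Rightarrow> real"
  shows "grad (\<lambda>x. - h x) x = - grad h x"
proof (cases "h differentiable (at x)")
  case True
  have "((\<lambda>x. - h x) has_derivative (\<lambda>v. - (grad h x \<bullet> v))) (at x)"
    using grad_works[OF True] by (auto intro!: derivative_eq_intros)
  also have "(\<lambda>v. - (grad h x \<bullet> v)) = (\<lambda>v. (- grad h x) \<bullet> v)" by auto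
  finally show ?thesis by (rule grad_intro)
next
  case False
  have "\<not> (\<lambda>x. - h x) differentiable (at x)"
  proof
    assume d: "(\<lambda>x. - h x) differentiable (at x)"
    then obtain D where D: "((\<lambda>x. - h x) has_derivative D) (at x)" by (auto simp: differentiable_def)
    have "((\<lambda>y. - (- h y)) has_derivative (\<lambda>v. - D v)) (at x)"
      using has_derivative_minus[OF D] by (simp only:)
    then show False using False by (auto simp: differentiable_def)
  qed
  then show ?thesis using False by (simp add: grad_nondiff)
qed

lemma grad_trunc:
  fixes h :: "'a::euclidean_space \<Rightarrow> real"
  assumes cont: "continuous_on UNIV h"
  shows "grad (\<lambda>x. max (-n) (min n (h x))) x = (if \<bar>h x\<bar> < n then grad h x else 0)"
proof -
  let ?T = "\<lambda>x. max (-n) (min n (h x))"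
  show ?thesis
  proof (cases "\<bar>h x\<bar> < n")
    case True
    define U where "U = {y. \<bar>h y\<bar> < n}"
    have "open U" unfolding U_def
      by (rule open_Collect_less[where f="\<lambda>y. \<bar>h y\<bar>"]) (auto intro!: continuous_intros cont)
    have xU: "x \<in> U" using True by (simp add: U_def)
    have eq: "\<And>y. y \<in> U \<Longrightarrow> ?T y = h y" by (auto simp: U_def)
    have "h differentiable (at x) \<longleftrightarrow> ?T differentiable (at x)"
    proof
      assume "h differentiable (at x)"
      then obtain D where "(h has_derivative D) (at x)" by (auto simp: differentiable_def)
      then have "(?T has_derivative D) (at x)"
        by (rule has_derivative_transform_within_open[OF _ \<open>open U\<close> xU]) (simp add: eq)
      then show "?T differentiable (at x)" by (auto simp: differentiable_def)
    next
      assume "?T differentiable (at x)"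
      then obtain D where "(?T has_derivative D) (at x)" by (auto simp: differentiable_def)
      then have "(h has_derivative D) (at x)"
        by (rule has_derivative_transform_within_open[OF _ \<open>open U\<close> xU]) (simp add: eq)
      then show "h differentiable (at x)" by (auto simp: differentiable_def)
    qed
    moreover have "h differentiable (at x) \<Longrightarrow> grad ?T x = grad h x"
    proof -
      assume hd: "h differentiable (at x)"
      have "(?T has_derivative (\<lambda>v. grad h x \<bullet> v)) (at x)"
        by (rule has_derivative_transform_within_open[OF grad_works[OF hd] \<open>open U\<close> xU]) (simp add: eq)
      then show ?thesis by (rule grad_intro)
    qed
    ultimately show ?thesis using True by (auto simp: grad_nondiff)
  next
    case False
    show ?thesis
    proof (cases "?T differentiable (at x)")
      case d: True
      have D: "(?T has_derivative (\<lambda>v. grad ?T x \<bullet> v)) (at x)" by (rule grad_works[OF d])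
      have "(\<lambda>v. grad ?T x \<bullet> v) = (\<lambda>v. 0)"
      proof (cases "h x \<ge> n")
        case True
        show ?thesis
        proof (rule has_derivative_local_max[OF D])
          show "\<forall>\<^sub>F y in at x. ?T y \<le> ?T x" using True by (auto intro!: always_eventually)
        qed
      next
        case False2: False
        then have "h x \<le> -n" using False by auto
        show ?thesis
        proof (rule has_derivative_local_min[OF D])
          show "\<forall>\<^sub>F y in at x. ?T x \<le> ?T y" using \<open>h x \<le> -n\<close> by (auto intro!: always_eventually)
        qed
      qed
      then have "grad ?T x = 0"
        by (metis inner_eq_zero_iff)
      then show ?thesis using False by simp
    next
      case False2: False
      then show ?thesis using False by (simp add: grad_nondiff)
    qed
  qed
qed

lemma exp_taylor1_bound:
  fixes v :: real
  shows "\<bar>exp v - 1 - v\<bar> \<le> v\<^sup>2 * exp \<bar>v\<bar>"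
proof -
  have a: "0 \<le> exp v - 1 - v" using exp_ge_add_one_self[of v] by linarith
  have "1 - v \<le> exp (-v)" using exp_ge_add_one_self[of "-v"] by simp
  then have "(1 - v) * exp v \<le> exp (-v) * exp v" by (simp add: mult_right_mono)
  then have b: "exp v - 1 - v \<le> v * (exp v - 1)" by (simp add: exp_minus field_simps)
  have c: "v * (exp v - 1) \<le> v\<^sup>2 * exp \<bar>v\<bar>"
  proof (cases "v \<ge> 0")
    case True
    have "exp v - 1 \<le> v * exp v" using b by (simp add: algebra_simps)
    then have "v * (exp v - 1) \<le> v * (v * exp v)" using True by (simp add: mult_left_mono)
    then show ?thesis using True by (simp add: power2_eq_square)
  next
    case False
    have "v * (exp v - 1) = (-v) * (1 - exp v)" by (simp add: algebra_simps)
    also have "\<dots> \<le> (-v) * (-v)" using False exp_ge_add_one_self[of v]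
      by (intro mult_left_mono) linarith+
    also have "\<dots> = v\<^sup>2 * 1" by (simp add: power2_eq_square)
    also have "\<dots> \<le> v\<^sup>2 * exp \<bar>v\<bar>" by (intro mult_left_mono) auto
    finally show ?thesis .
  qed
  have "\<bar>exp v - 1 - v\<bar> = exp v - 1 - v" using a by simp
  then show ?thesis using b c by linarith
qed

lemma mul_le_absB:
  fixes l y B :: real
  assumes "\<bar>y\<bar> \<le> B" shows "l * y \<le> \<bar>l\<bar> * B"
proof -
  have "l * y \<le> \<bar>l * y\<bar>" by (rule abs_ge_self)
  also have "\<dots> = \<bar>l\<bar> * \<bar>y\<bar>" by (rule abs_mult)
  also have "\<dots> \<le> \<bar>l\<bar> * B" using assms by (intro mult_left_mono) auto
  finally show ?thesis .
qed

lemma deriv_mgf: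
  fixes h :: "'a \<Rightarrow> real"
  assumes P: "prob_space M" and hm: "h \<in> borel_measurable M" and hB: "\<And>x. \<bar>h x\<bar> \<le> B"
  shows "((\<lambda>l. \<integral>x. exp (l * h x) \<partial>M) has_real_derivative (\<integral>x. h x * exp (l0 * h x) \<partial>M)) (at l0)"
proof -
  interpret prob_space M by (rule P)
  have B0: "B \<ge> 0" using hB[of undefined] by simp
  have int: "integrable M (\<lambda>x. exp (l * h x))" for l
  proof (rule integrable_const_bound[where B="exp (\<bar>l\<bar> * B)"])
    show "AE x in M. norm (exp (l * h x)) \<le> exp (\<bar>l\<bar> * B)"
    proof (intro AE_I2)
      fix x have "l * h x \<le> \<bar>l\<bar> * B" by (rule mul_le_absB[OF hB])
      then show "norm (exp (l * h x)) \<le> exp (\<bar>l\<bar> * B)" by simp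
    qed
  qed (use hm in simp)
  have intD: "integrable M (\<lambda>x. h x * exp (l * h x))" for l
  proof (rule integrable_const_bound[where B="B * exp (\<bar>l\<bar> * B)"])
    show "AE x in M. norm (h x * exp (l * h x)) \<le> B * exp (\<bar>l\<bar> * B)"
    proof (intro AE_I2)
      fix x have "l * h x \<le> \<bar>l\<bar> * B" by (rule mul_le_absB[OF hB])
      then have "exp (l * h x) \<le> exp (\<bar>l\<bar> * B)" by simp
      then show "norm (h x * exp (l * h x)) \<le> B * exp (\<bar>l\<bar> * B)"
        using hB[of x] by (simp add: abs_mult mult_mono)
    qed
  qed (use hm in simp)
  define \<Phi> where "\<Phi> l = (\<integral>x. exp (l * h x) \<partial>M)" for l
  define D where "D = (\<integral>x. h x * exp (l0 * h x) \<partial>M)"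
  define C where "C = B\<^sup>2 * exp ((\<bar>l0\<bar> + 1) * B)"
  have key: "\<bar>(\<Phi> l - \<Phi> l0) / (l - l0) - D\<bar> \<le> \<bar>l - l0\<bar> * C" if "\<bar>l - l0\<bar> \<le> 1" "l \<noteq> l0" for l
  proof -
    have pw: "\<bar>exp (l * h x) - exp (l0 * h x) - (l - l0) * (h x * exp (l0 * h x))\<bar> \<le> (l - l0)\<^sup>2 * C" for x
    proof -
      define v where "v = (l - l0) * h x"
      have "exp (l * h x) - exp (l0 * h x) - (l - l0) * (h x * exp (l0 * h x))
            = exp (l0 * h x) * (exp v - 1 - v)"
      proof -
        have "l * h x = l0 * h x + v" by (simp add: v_def algebra_simps)
        then have "exp (l * h x) = exp (l0 * h x) * exp v" by (simp add: exp_add)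
        then show ?thesis by (simp add: v_def algebra_simps)
      qed
      then have "\<bar>exp (l * h x) - exp (l0 * h x) - (l - l0) * (h x * exp (l0 * h x))\<bar>
             = exp (l0 * h x) * \<bar>exp v - 1 - v\<bar>" by (simp add: abs_mult)
      also have "\<dots> \<le> exp (l0 * h x) * (v\<^sup>2 * exp \<bar>v\<bar>)"
        by (intro mult_left_mono exp_taylor1_bound) auto
      also have "\<dots> \<le> exp (\<bar>l0\<bar> * B) * (((l - l0)\<^sup>2 * B\<^sup>2) * exp B)"
      proof (intro mult_mono)
        show "exp (l0 * h x) \<le> exp (\<bar>l0\<bar> * B)"
          using mul_le_absB[OF hB] by simp
        have "\<bar>v\<bar> \<le> 1 * B" unfolding v_def abs_mult using that(1) hB[of x] B0
          by (intro mult_mono) auto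
        then show "exp \<bar>v\<bar> \<le> exp B" by simp
        have "v\<^sup>2 = (l - l0)\<^sup>2 * (h x)\<^sup>2" by (simp add: v_def power_mult_distrib)
        also have "\<dots> \<le> (l - l0)\<^sup>2 * B\<^sup>2"
          using hB[of x] by (intro mult_left_mono) (auto simp: abs_le_square_iff[symmetric] abs_le_iff)
        finally show "v\<^sup>2 \<le> (l - l0)\<^sup>2 * B\<^sup>2" .
      qed auto
      also have "\<dots> = (l - l0)\<^sup>2 * C"
      proof -
        have "exp ((\<bar>l0\<bar> + 1) * B) = exp (\<bar>l0\<bar> * B) * exp B" by (simp add: distrib_right exp_add)
        then show ?thesis by (simp add: C_def mult_ac)
      qed
      finally show ?thesis .
    qed
    let ?R = "\<lambda>x. exp (l * h x) - exp (l0 * h x) - (l - l0) * (h x * exp (l0 * h x))"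
    have i1: "integrable M (\<lambda>x. exp (l * h x) - exp (l0 * h x))"
      by (rule Bochner_Integration.integrable_diff[OF int int])
    have i2: "integrable M (\<lambda>x. (l - l0) * (h x * exp (l0 * h x)))"
      by (rule integrable_mult_right[OF intD])
    have iR: "integrable M ?R" by (rule Bochner_Integration.integrable_diff[OF i1 i2])
    have "(\<integral>x. ?R x \<partial>M) = (\<integral>x. exp (l * h x) - exp (l0 * h x) \<partial>M) - (\<integral>x. (l - l0) * (h x * exp (l0 * h x)) \<partial>M)"
      by (rule Bochner_Integration.integral_diff[OF i1 i2])
    also have "(\<integral>x. exp (l * h x) - exp (l0 * h x) \<partial>M) = \<Phi> l - \<Phi> l0"
      unfolding \<Phi>_def by (rule Bochner_Integration.integral_diff[OF int int])
    also have "(\<integral>x. (l - l0) * (h x * exp (l0 * h x)) \<partial>M) = (l - l0) * D"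
      unfolding D_def by (rule integral_mult_right_zero)
    finally have eqR: "\<Phi> l - \<Phi> l0 - (l - l0) * D = (\<integral>x. ?R x \<partial>M)" by (rule sym)
    have "\<bar>\<integral>x. ?R x \<partial>M\<bar> \<le> (\<integral>x. norm (?R x) \<partial>M)"
      using integral_norm_bound[of M ?R] by (simp only: real_norm_def)
    also have "\<dots> \<le> (\<integral>x. (l - l0)\<^sup>2 * C \<partial>M)"
    proof (rule integral_mono)
      show "integrable M (\<lambda>x. norm (?R x))" by (rule integrable_norm[OF iR])
      show "integrable M (\<lambda>x. (l - l0)\<^sup>2 * C)" by (rule integrable_const)
      show "norm (?R x) \<le> (l - l0)\<^sup>2 * C" for x using pw[of x] by (simp only: real_norm_def)
    qed
    also have "\<dots> = (l - l0)\<^sup>2 * C" by (simp add: prob_space)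
    finally have N0: "\<bar>\<integral>x. ?R x \<partial>M\<bar> \<le> (l - l0)\<^sup>2 * C" .
    have N: "\<bar>\<Phi> l - \<Phi> l0 - (l - l0) * D\<bar> \<le> (l - l0)\<^sup>2 * C" unfolding eqR by (rule N0)
    have E:  "(\<Phi> l - \<Phi> l0) / (l - l0) - D = (\<Phi> l - \<Phi> l0 - (l - l0) * D) / (l - l0)"
      using that(2) by (simp add: diff_divide_distrib)
    have F: "\<bar>(\<Phi> l - \<Phi> l0 - (l - l0) * D) / (l - l0)\<bar> \<le> \<bar>l - l0\<bar> * C"
    proof -
      have nz: "\<bar>l - l0\<bar> > 0" using that(2) by simp
      have "\<bar>(\<Phi> l - \<Phi> l0 - (l - l0) * D) / (l - l0)\<bar> = \<bar>\<Phi> l - \<Phi> l0 - (l - l0) * D\<bar> / \<bar>l - l0\<bar>"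
        by (rule abs_divide)
      also have "\<dots> \<le> (l - l0)\<^sup>2 * C / \<bar>l - l0\<bar>"
        by (rule divide_right_mono) (use N in auto)
      also have "(l - l0)\<^sup>2 = \<bar>l - l0\<bar> * \<bar>l - l0\<bar>" by (simp add: power2_eq_square flip: abs_mult)
      also have "\<bar>l - l0\<bar> * \<bar>l - l0\<bar> * C / \<bar>l - l0\<bar> = \<bar>l - l0\<bar> * C"
        using nz by (simp only: times_divide_eq_right[symmetric] mult.assoc nonzero_mult_div_cancel_left) (simp add: field_simps)
      finally show ?thesis .
    qed
    show ?thesis using E F by simp
  qed
  have "((\<lambda>l. (\<Phi> l - \<Phi> l0) / (l - l0) - D) \<longlongrightarrow> 0) (at l0)"
  proof (rule Lim_null_comparison)
    show "\<forall>\<^sub>F l in at l0. norm ((\<Phi> l - \<Phi> l0) / (l - l0) - D) \<le> \<bar>l - l0\<bar> * C"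
      unfolding eventually_at
    proof (rule exI[of _ 1], intro conjI ballI impI)
      fix l assume a: "l \<noteq> l0 \<and> dist l l0 < 1"
      then have d1: "\<bar>l - l0\<bar> \<le> 1" by (simp add: dist_real_def)
      have "\<bar>(\<Phi> l - \<Phi> l0) / (l - l0) - D\<bar> \<le> \<bar>l - l0\<bar> * C" using a key[OF d1] by blast
      then show "norm ((\<Phi> l - \<Phi> l0) / (l - l0) - D) \<le> \<bar>l - l0\<bar> * C"
        by (simp only: real_norm_def)
    qed simp
    have "((\<lambda>l. \<bar>l - l0\<bar> * C) \<longlongrightarrow> \<bar>l0 - l0\<bar> * C) (at l0)"
      by (intro tendsto_intros)
    then show "((\<lambda>l. \<bar>l - l0\<bar> * C) \<longlongrightarrow> 0) (at l0)" by simp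
  qed
  then have "((\<lambda>l. (\<Phi> l - \<Phi> l0) / (l - l0)) \<longlongrightarrow> D) (at l0)"
    by (simp add: LIM_zero_iff)
  then show ?thesis unfolding has_field_derivative_iff \<Phi>_def D_def .
qed

lemma exp_lipschitz_le:
  fixes K :: real
  shows "(exp K)-lipschitz_on {..K} exp"
proof (rule lipschitz_onI)
  have aux: "exp b - exp a \<le> exp K * (b - a)" if "a \<le> b" "b \<le> K" for a b :: real
  proof -
    have "1 - exp (a - b) \<le> b - a" using exp_ge_add_one_self[of "a - b"] by linarith
    then have "exp b * (1 - exp (a - b)) \<le> exp b * (b - a)" by (intro mult_left_mono) auto
    also have "\<dots> \<le> exp K * (b - a)" using that by (intro mult_right_mono) auto
    finally show ?thesis by (simp add: algebra_simps flip: exp_add)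
  qed
  fix x y :: real assume "x \<in> {..K}" "y \<in> {..K}"
  then show "dist (exp x) (exp y) \<le> exp K * dist x y"
    using aux[of x y] aux[of y x] by (cases "x \<le> y") (auto simp: dist_real_def abs_if algebra_simps)
qed simp

lemma lipschitz_imp_continuous:
  "L-lipschitz_on UNIV h \<Longrightarrow> continuous_on UNIV h"
  using lipschitz_on_continuous_on by blast

lemma lsi_exp:
  fixes h :: "'a::euclidean_space \<Rightarrow> real" and \<gamma> :: "'a measure"
  assumes sg: "sets \<gamma> = sets borel" and P: "prob_space \<gamma>" and lsi: "LSI \<gamma> \<alpha>"
    and Lh: "L-lipschitz_on UNIV h" and hB: "\<And>x. \<bar>h x\<bar> \<le> B"
    and gm: "(\<lambda>x. norm (grad h x)) \<in> borel_measurable borel"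
    and ae: "AE x in \<gamma>. norm (grad h x) \<le> 1" and l: "l > 0" and a0: "\<alpha> \<ge> 0"
  shows "l * (\<integral>x. h x * exp (l * h x) \<partial>\<gamma>) - (\<integral>x. exp (l * h x) \<partial>\<gamma>) * ln (\<integral>x. exp (l * h x) \<partial>\<gamma>)
         \<le> \<alpha> * l\<^sup>2 / 4 * (\<integral>x. exp (l * h x) \<partial>\<gamma>)"
proof -
  interpret prob_space \<gamma> by (rule P)
  have hc: "continuous_on UNIV h" using Lh by (rule lipschitz_imp_continuous)
  have hm: "h \<in> borel_measurable \<gamma>"
    unfolding measurable_cong_sets[OF sg refl] by (rule borel_measurable_continuous_onI[OF hc])
  have gm': "(\<lambda>x. norm (grad h x)) \<in> borel_measurable \<gamma>"
    unfolding measurable_cong_sets[OF sg refl] by (rule gm)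
  have B0: "B \<ge> 0" using hB[of undefined] by simp
  define g where "g x = exp ((l/2) * h x)" for x
  have g2: "(g x)\<^sup>2 = exp (l * h x)" for x
    unfolding g_def by (simp add: power2_eq_square flip: exp_add)
  have gradg: "grad g x = ((l/2) * g x) *\<^sub>R grad h x" for x
    unfolding g_def using grad_exp_comp[of "l/2" h x] l by simp
  have int: "integrable \<gamma> (\<lambda>x. exp (l * h x))"
  proof (rule integrable_const_bound[where B="exp (\<bar>l\<bar> * B)"])
    show "AE x in \<gamma>. norm (exp (l * h x)) \<le> exp (\<bar>l\<bar> * B)"
      using mul_le_absB[OF hB] by (intro AE_I2) simp
  qed (use hm in simp)
  have intD: "integrable \<gamma> (\<lambda>x. h x * exp (l * h x))"
  proof (rule integrable_const_bound[where B="B * exp (\<bar>l\<bar> * B)"])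
    show "AE x in \<gamma>. norm (h x * exp (l * h x)) \<le> B * exp (\<bar>l\<bar> * B)"
    proof (intro AE_I2)
      fix x have "exp (l * h x) \<le> exp (\<bar>l\<bar> * B)" using mul_le_absB[OF hB] by simp
      then show "norm (h x * exp (l * h x)) \<le> B * exp (\<bar>l\<bar> * B)"
        using hB[of x] by (simp add: abs_mult mult_mono)
    qed
  qed (use hm in simp)
  have ng2: "(norm (grad g x))\<^sup>2 = (l/2)\<^sup>2 * exp (l * h x) * (norm (grad h x))\<^sup>2" for x
  proof -
    have "(norm (grad g x))\<^sup>2 = ((l/2) * g x)\<^sup>2 * (norm (grad h x))\<^sup>2"
      unfolding gradg by (simp only: norm_scaleR real_norm_def power_mult_distrib power2_abs)
    also have "\<dots> = (l/2)\<^sup>2 * exp (l * h x) * (norm (grad h x))\<^sup>2"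
      by (simp only: power_mult_distrib g2)
    finally show ?thesis .
  qed
  have intG: "integrable \<gamma> (\<lambda>x. (norm (grad g x))\<^sup>2)"
    unfolding ng2
  proof (rule integrable_const_bound[where B="(l/2)\<^sup>2 * exp (\<bar>l\<bar> * B)"])
    show "AE x in \<gamma>. norm ((l/2)\<^sup>2 * exp (l * h x) * (norm (grad h x))\<^sup>2) \<le> (l/2)\<^sup>2 * exp (\<bar>l\<bar> * B)"
      using ae
    proof eventually_elim
      case (elim x)
      have e: "exp (l * h x) \<le> exp (\<bar>l\<bar> * B)" using mul_le_absB[OF hB] by simp
      have n: "(norm (grad h x))\<^sup>2 \<le> 1" using elim by (simp add: power_le_one)
      have "exp (l * h x) * (norm (grad h x))\<^sup>2 \<le> exp (\<bar>l\<bar> * B) * 1"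
        using e n by (intro mult_mono) auto
      then show ?case by (simp add: abs_mult mult.assoc mult_left_mono)
    qed
  qed (use hm gm' in simp)
  have gH1: "g \<in> H1 \<gamma>"
    unfolding H1_def
  proof (intro CollectI conjI allI)
    fix x
    have c1: "(\<bar>l/2\<bar> * L)-lipschitz_on UNIV (\<lambda>y. (l/2) * h y)"
      by (rule lipschitz_on_cmult_real[OF Lh])
    have "(exp (\<bar>l/2\<bar> * B))-lipschitz_on {..\<bar>l/2\<bar> * B} exp" by (rule exp_lipschitz_le)
    moreover have "(\<lambda>y. (l/2) * h y) ` UNIV \<subseteq> {..\<bar>l/2\<bar> * B}" using mul_le_absB[OF hB] by auto
    ultimately have c2: "(exp (\<bar>l/2\<bar> * B))-lipschitz_on ((\<lambda>y. (l/2) * h y) ` UNIV) exp"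
      by (rule lipschitz_on_subset)
    have "(exp (\<bar>l/2\<bar> * B) * (\<bar>l/2\<bar> * L))-lipschitz_on UNIV (\<lambda>y. exp ((l/2) * h y))"
      using lipschitz_on_compose2[OF c1 c2] by simp
    then have "(exp (\<bar>l/2\<bar> * B) * (\<bar>l/2\<bar> * L))-lipschitz_on (ball x 1) g"
      unfolding g_def by (rule lipschitz_on_subset) simp
    then show "\<exists>e>0. \<exists>L. L-lipschitz_on (ball x e) g" by (intro exI[of _ 1]) auto
  next
    show "integrable \<gamma> (\<lambda>x. (g x)\<^sup>2)" unfolding g2 by (rule int)
  next
    show "integrable \<gamma> (\<lambda>x. (norm (grad g x))\<^sup>2)" by (rule intG)
  qed
  have E1: "Ent \<gamma> (\<lambda>x. (g x)\<^sup>2) \<le> \<alpha> * (\<integral>x. (norm (grad g x))\<^sup>2 \<partial>\<gamma>)"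
    using lsi gH1 unfolding LSI_def by (auto simp: g_def)
  have E2: "Ent \<gamma> (\<lambda>x. (g x)\<^sup>2) = l * (\<integral>x. h x * exp (l * h x) \<partial>\<gamma>) - (\<integral>x. exp (l * h x) \<partial>\<gamma>) * ln (\<integral>x. exp (l * h x) \<partial>\<gamma>)"
  proof -
    have "(\<integral>x. exp (l * h x) * ln (exp (l * h x)) \<partial>\<gamma>) = (\<integral>x. l * (h x * exp (l * h x)) \<partial>\<gamma>)"
      by (rule Bochner_Integration.integral_cong) (auto simp: mult_ac)
    also have "\<dots> = l * (\<integral>x. h x * exp (l * h x) \<partial>\<gamma>)" by (rule integral_mult_right_zero)
    finally show ?thesis unfolding Ent_def g2 by simp
  qed
  have E3: "(\<integral>x. (norm (grad g x))\<^sup>2 \<partial>\<gamma>) \<le> (\<integral>x. (l/2)\<^sup>2 * exp (l * h x) \<partial>\<gamma>)"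
  proof (rule integral_mono_AE)
    show "integrable \<gamma> (\<lambda>x. (l/2)\<^sup>2 * exp (l * h x))" by (rule integrable_mult_right[OF int])
    show "AE x in \<gamma>. (norm (grad g x))\<^sup>2 \<le> (l/2)\<^sup>2 * exp (l * h x)"
      using ae
    proof eventually_elim
      case (elim x)
      have n: "(norm (grad h x))\<^sup>2 \<le> 1" using elim by (simp add: power_le_one)
      have "(l/2)\<^sup>2 * exp (l * h x) * (norm (grad h x))\<^sup>2 \<le> (l/2)\<^sup>2 * exp (l * h x) * 1"
        using n by (intro mult_left_mono) auto
      then show ?case unfolding ng2 by simp
    qed
  qed (rule intG)
  have E4: "(\<integral>x. (l/2)\<^sup>2 * exp (l * h x) \<partial>\<gamma>) = (l/2)\<^sup>2 * (\<integral>x. exp (l * h x) \<partial>\<gamma>)"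
    by (rule integral_mult_right_zero)
  have "\<alpha> * (\<integral>x. (norm (grad g x))\<^sup>2 \<partial>\<gamma>) \<le> \<alpha> * ((l/2)\<^sup>2 * (\<integral>x. exp (l * h x) \<partial>\<gamma>))"
    using E3 E4 a0 by (simp add: mult_left_mono)
  also have "\<alpha> * ((l/2)\<^sup>2 * (\<integral>x. exp (l * h x) \<partial>\<gamma>)) = \<alpha> * l\<^sup>2 / 4 * (\<integral>x. exp (l * h x) \<partial>\<gamma>)"
    by (simp add: power_divide)
  finally show ?thesis using E1 E2 by linarith
qed

lemma herbst_pos:
  fixes h :: "'a::euclidean_space \<Rightarrow> real" and \<gamma> :: "'a measure"
  assumes sg: "sets \<gamma> = sets borel" and P: "prob_space \<gamma>" and lsi: "LSI \<gamma> \<alpha>"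
    and Lh: "L-lipschitz_on UNIV h" and hB: "\<And>x. \<bar>h x\<bar> \<le> B"
    and gm: "(\<lambda>x. norm (grad h x)) \<in> borel_measurable borel"
    and ae: "AE x in \<gamma>. norm (grad h x) \<le> 1" and a0: "\<alpha> \<ge> 0" and l: "l > 0"
  shows "(\<integral>x. exp (l * h x) \<partial>\<gamma>) \<le> exp (l * (\<integral>x. h x \<partial>\<gamma>) + \<alpha> * l\<^sup>2 / 4)"
proof -
  interpret prob_space \<gamma> by (rule P)
  have hc: "continuous_on UNIV h" using Lh by (rule lipschitz_imp_continuous)
  have hm: "h \<in> borel_measurable \<gamma>"
    unfolding measurable_cong_sets[OF sg refl] by (rule borel_measurable_continuous_onI[OF hc])
  define \<Phi> where "\<Phi> t = (\<integral>x. exp (t * h x) \<partial>\<gamma>)" for t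
  define \<Phi>' where "\<Phi>' t = (\<integral>x. h x * exp (t * h x) \<partial>\<gamma>)" for t
  define m0 where "m0 = (\<integral>x. h x \<partial>\<gamma>)"
  have dPhi: "(\<Phi> has_real_derivative \<Phi>' t) (at t)" for t
    unfolding \<Phi>_def \<Phi>'_def by (rule deriv_mgf[OF P hm hB])
  have Phipos: "\<Phi> t > 0" for t
  proof -
    have int: "integrable \<gamma> (\<lambda>x. exp (t * h x))"
    proof (rule integrable_const_bound[where B="exp (\<bar>t\<bar> * B)"])
      show "AE x in \<gamma>. norm (exp (t * h x)) \<le> exp (\<bar>t\<bar> * B)"
        using mul_le_absB[OF hB] by (intro AE_I2) simp
    qed (use hm in simp)
    have "(\<integral>x. exp (- (\<bar>t\<bar> * B)) \<partial>\<gamma>) \<le> \<Phi> t"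
      unfolding \<Phi>_def
    proof (rule integral_mono[OF _ int])
      show "exp (- (\<bar>t\<bar> * B)) \<le> exp (t * h x)" for x
        using mul_le_absB[OF hB[of x], of "-t"] by simp
    qed simp
    moreover have "(\<integral>x. exp (- (\<bar>t\<bar> * B)) \<partial>\<gamma>) = exp (- (\<bar>t\<bar> * B))" by (simp add: prob_space)
    ultimately show ?thesis by (metis exp_gt_zero order_less_le_trans)
  qed
  have Phi0: "\<Phi> 0 = 1" unfolding \<Phi>_def by (simp add: prob_space)
  have Phi'0: "\<Phi>' 0 = m0" unfolding \<Phi>'_def m0_def by simp
  have lsiI: "t * \<Phi>' t - \<Phi> t * ln (\<Phi> t) \<le> \<alpha> * t\<^sup>2 / 4 * \<Phi> t" if "t > 0" for t
    unfolding \<Phi>_def \<Phi>'_def by (rule lsi_exp[OF sg P lsi Lh hB gm ae that a0])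
  define G where "G t = ln (\<Phi> t) - t * m0 - \<alpha> * t\<^sup>2 / 4" for t
  define G' where "G' t = \<Phi>' t / \<Phi> t - m0 - \<alpha> * t / 2" for t
  have dG: "(G has_real_derivative G' t) (at t)" for t
  proof -
    have d1: "((\<lambda>z. ln (\<Phi> z)) has_real_derivative (inverse (\<Phi> t) * \<Phi>' t)) (at t)"
      by (rule DERIV_chain2[OF DERIV_ln[OF Phipos] dPhi])
    have d2: "((\<lambda>z. z * m0) has_real_derivative m0) (at t)" by (auto intro!: derivative_eq_intros)
    have d3: "((\<lambda>z. \<alpha> * z\<^sup>2 / 4) has_real_derivative \<alpha> * t / 2) (at t)" by (auto intro!: derivative_eq_intros)
    have "((\<lambda>t. ln (\<Phi> t) - t * m0 - \<alpha> * t\<^sup>2 / 4) has_real_derivative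
           (inverse (\<Phi> t) * \<Phi>' t - m0 - \<alpha> * t / 2)) (at t)"
      by (intro DERIV_diff d1 d2 d3)
    then show ?thesis unfolding G_def[abs_def] G'_def by (simp add: field_simps)
  qed
  have G0: "G 0 = 0" by (simp add: G_def Phi0)
  have G'0: "G' 0 = 0" by (simp add: G'_def Phi0 Phi'0)
  define H where "H t = G t / t" for t
  have dH: "(H has_real_derivative (t * G' t - G t) / t\<^sup>2) (at t)" if "t > 0" for t
  proof -
    have "((\<lambda>t. G t / t) has_real_derivative (G' t * t - G t * 1) / (t * t)) (at t)"
      by (rule DERIV_divide[OF dG DERIV_ident]) (use that in simp)
    then show ?thesis unfolding H_def[abs_def] by (simp add: power2_eq_square mult.commute)
  qed
  have dHneg: "(t * G' t - G t) / t\<^sup>2 \<le> 0" if "t > 0" for t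
  proof -
    have "t * G' t - G t = (t * \<Phi>' t - \<Phi> t * ln (\<Phi> t)) / \<Phi> t - \<alpha> * t\<^sup>2 / 4"
      using Phipos[of t] by (simp add: G_def G'_def field_simps power2_eq_square)
    also have "\<dots> \<le> (\<alpha> * t\<^sup>2 / 4 * \<Phi> t) / \<Phi> t - \<alpha> * t\<^sup>2 / 4"
      using lsiI[OF that] Phipos[of t] by (intro diff_right_mono divide_right_mono) auto
    also have "\<dots> = 0" using Phipos[of t] by simp
    finally have "t * G' t - G t \<le> 0" .
    moreover have "t\<^sup>2 > 0" using that by simp
    ultimately show ?thesis by (rule divide_nonpos_pos)
  qed
  have "H l \<le> 0"
  proof -
    have lim0: "((\<lambda>e. (G e - G 0) / (e - 0)) \<longlongrightarrow> G' 0) (at 0)"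
      using dG[of 0] unfolding has_field_derivative_iff .
    then have "(H \<longlongrightarrow> 0) (at_right 0)"
      unfolding H_def[abs_def] using G0 G'0 by (auto intro: tendsto_mono[OF at_le])
    moreover have "((\<lambda>e. H l) \<longlongrightarrow> H l) (at_right (0::real))" by simp
    moreover have "\<forall>\<^sub>F e in at_right 0. H l \<le> H e"
    proof -
      have "\<forall>\<^sub>F e in at_right (0::real). e < l" using l
        by (subst eventually_at_right[OF l]) auto
      then show ?thesis
      proof (rule eventually_mono[OF eventually_conj[OF _ eventually_at_right_less]])
        fix e :: real assume e: "e < l \<and> 0 < e"
        show "H l \<le> H e"
        proof (rule DERIV_nonpos_imp_nonincreasing[where f=H])
          show "e \<le> l" using e by simp
          fix x assume "e \<le> x" "x \<le> l"
          then have "x > 0" using e by simp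
          then show "\<exists>y. DERIV H x :> y \<and> y \<le> 0" using dH dHneg by blast
        qed
      qed
    qed
    ultimately show ?thesis by (intro tendsto_le[of "at_right 0"]) auto
  qed
  then have "G l \<le> 0" using l by (simp add: H_def divide_le_0_iff)
  then have "ln (\<Phi> l) \<le> l * m0 + \<alpha> * l\<^sup>2 / 4" by (simp add: G_def)
  then have "\<Phi> l \<le> exp (l * m0 + \<alpha> * l\<^sup>2 / 4)"
    using Phipos[of l] by (metis exp_le_cancel_iff exp_ln)
  then show ?thesis by (simp add: \<Phi>_def m0_def)
qed

lemma herbst_bounded:
  fixes h :: "'a::euclidean_space \<Rightarrow> real" and \<gamma> :: "'a measure"
  assumes sg: "sets \<gamma> = sets borel" and P: "prob_space \<gamma>" and lsi: "LSI \<gamma> \<alpha>"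
    and Lh: "L-lipschitz_on UNIV h" and hB: "\<And>x. \<bar>h x\<bar> \<le> B"
    and gm: "(\<lambda>x. norm (grad h x)) \<in> borel_measurable borel"
    and ae: "AE x in \<gamma>. norm (grad h x) \<le> 1" and a0: "\<alpha> \<ge> 0"
  shows "(\<integral>x. exp (l * h x) \<partial>\<gamma>) \<le> exp (l * (\<integral>x. h x \<partial>\<gamma>) + \<alpha> * l\<^sup>2 / 4)"
proof -
  interpret prob_space \<gamma> by (rule P)
  consider "l > 0" | "l = 0" | "l < 0" by linarith
  then show ?thesis
  proof cases
    case 1 then show ?thesis by (rule herbst_pos[OF sg P lsi Lh hB gm ae a0])
  next
    case 2 then show ?thesis by (simp add: prob_space)
  next
    case 3
    have Lh': "L-lipschitz_on UNIV (\<lambda>x. - h x)" using Lh by (rule lipschitz_on_minus)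
    have hB': "\<bar>- h x\<bar> \<le> B" for x using hB[of x] by simp
    have ng: "norm (grad (\<lambda>x. - h x) x) = norm (grad h x)" for x by (simp add: grad_uminus)
    have gm': "(\<lambda>x. norm (grad (\<lambda>x. - h x) x)) \<in> borel_measurable borel" unfolding ng by (rule gm)
    have ae': "AE x in \<gamma>. norm (grad (\<lambda>x. - h x) x) \<le> 1" unfolding ng by (rule ae)
    have "(\<integral>x. exp ((-l) * (- h x)) \<partial>\<gamma>) \<le> exp ((-l) * (\<integral>x. - h x \<partial>\<gamma>) + \<alpha> * (-l)\<^sup>2 / 4)"
      using 3 by (intro herbst_pos[OF sg P lsi Lh' hB' gm' ae' a0]) simp
    then show ?thesis by simp
  qed
qed

lemma clamp_dist:
  fixes n a b :: real
  shows "\<bar>max (-n) (min n a) - max (-n) (min n b)\<bar> \<le> \<bar>a - b\<bar>"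
  by (simp add: abs_if max_def min_def)

lemma herbst_full:
  fixes f :: "'a::euclidean_space \<Rightarrow> real" and \<gamma> :: "'a measure"
  assumes sg: "sets \<gamma> = sets borel" and P: "prob_space \<gamma>" and lsi: "LSI \<gamma> \<alpha>" and a0: "\<alpha> \<ge> 0"
    and Lf: "L-lipschitz_on UNIV f"
    and gm: "(\<lambda>x. norm (grad f x)) \<in> borel_measurable borel"
    and ae: "AE x in \<gamma>. norm (grad f x) \<le> 1"
  shows "\<exists>c. \<forall>l. (\<integral>\<^sup>+x. ennreal (exp (l * (f x - c))) \<partial>\<gamma>) \<le> ennreal (exp (\<alpha> * l\<^sup>2 / 4))"
proof -
  interpret prob_space \<gamma> by (rule P)
  have fc: "continuous_on UNIV f" using Lf by (rule lipschitz_imp_continuous)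
  have fm[measurable]: "f \<in> borel_measurable borel" by (rule borel_measurable_continuous_onI[OF fc])
  note gm[measurable]
  have fmg[measurable]: "f \<in> borel_measurable \<gamma>"
    unfolding measurable_cong_sets[OF sg refl] by (rule fm)
  have L0: "L \<ge> 0" using Lf by (rule lipschitz_on_nonneg)
  define T where "T n x = max (- real n) (min (real n) (f x))" for n x
  define c where "c n = (\<integral>x. T n x \<partial>\<gamma>)" for n
  have Teq: "T n = (\<lambda>x. max (- real n) (min (real n) (f x)))" for n by (rule ext) (simp add: T_def)
  have TL: "L-lipschitz_on UNIV (T n)" for n
  proof (rule lipschitz_onI)
    fix x y :: 'a
    have "dist (T n x) (T n y) \<le> dist (f x) (f y)"
      unfolding T_def dist_real_def by (rule clamp_dist)
    also have "\<dots> \<le> L * dist x y" by (rule lipschitz_onD[OF Lf]) auto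
    finally show "dist (T n x) (T n y) \<le> L * dist x y" .
  qed (rule L0)
  have TB: "\<bar>T n x\<bar> \<le> real n" for n x by (simp add: T_def abs_le_iff)
  have Tgrad: "norm (grad (T n) x) = (if \<bar>f x\<bar> < real n then norm (grad f x) else 0)" for n x
    unfolding Teq using grad_trunc[OF fc, of "real n" x] by simp
  have Tgm: "(\<lambda>x. norm (grad (T n) x)) \<in> borel_measurable borel" for n
    unfolding Tgrad by measurable
  have Tae: "AE x in \<gamma>. norm (grad (T n) x) \<le> 1" for n
    using ae by eventually_elim (simp add: Tgrad)
  have Tm[measurable]: "T n \<in> borel_measurable \<gamma>" for n
    unfolding Teq by measurable
  have Tint: "integrable \<gamma> (\<lambda>x. exp (l * T n x))" for l n
  proof (rule integrable_const_bound[where B="exp (\<bar>l\<bar> * real n)"])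
    show "AE x in \<gamma>. norm (exp (l * T n x)) \<le> exp (\<bar>l\<bar> * real n)"
      using mul_le_absB[OF TB] by (intro AE_I2) simp
  qed simp
  have bndB: "(\<integral>x. exp (l * (T n x - c n)) \<partial>\<gamma>) \<le> exp (\<alpha> * l\<^sup>2 / 4)" for l n
  proof -
    have "(\<integral>x. exp (l * (T n x - c n)) \<partial>\<gamma>) = (\<integral>x. exp (- (l * c n)) * exp (l * T n x) \<partial>\<gamma>)"
      by (rule Bochner_Integration.integral_cong) (simp_all add: right_diff_distrib exp_diff exp_minus field_simps)
    also have "\<dots> = exp (- (l * c n)) * (\<integral>x. exp (l * T n x) \<partial>\<gamma>)" by (rule integral_mult_right_zero)
    also have "\<dots> \<le> exp (- (l * c n)) * exp (l * c n + \<alpha> * l\<^sup>2 / 4)"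
      unfolding c_def by (intro mult_left_mono herbst_bounded[OF sg P lsi TL TB Tgm Tae a0]) simp
    also have "\<dots> = exp (\<alpha> * l\<^sup>2 / 4)" by (simp flip: exp_add)
    finally show ?thesis .
  qed
  have bndN: "(\<integral>\<^sup>+x. ennreal (exp (l * (T n x - c n))) \<partial>\<gamma>) \<le> ennreal (exp (\<alpha> * l\<^sup>2 / 4))" for l n
  proof -
    have "integrable \<gamma> (\<lambda>x. exp (- (l * c n)) * exp (l * T n x))"
      by (rule integrable_mult_right[OF Tint])
    then have i: "integrable \<gamma> (\<lambda>x. exp (l * (T n x - c n)))"
      by (rule Bochner_Integration.integrable_cong[THEN iffD1, rotated 2])
         (simp_all add: right_diff_distrib exp_diff exp_minus field_simps)
    have "(\<integral>\<^sup>+x. ennreal (exp (l * (T n x - c n))) \<partial>\<gamma>) = ennreal (\<integral>x. exp (l * (T n x - c n)) \<partial>\<gamma>)"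
      by (rule nn_integral_eq_integral[OF i]) simp
    then show ?thesis using bndB[of l n] by (simp add: ennreal_leI)
  qed
  obtain K :: nat where pA: "measure \<gamma> {x \<in> space \<gamma>. \<bar>f x\<bar> \<le> real K} > 0"
  proof (rule ccontr)
    assume nt: "\<not> thesis"
    have z: "measure \<gamma> {x \<in> space \<gamma>. \<bar>f x\<bar> \<le> real K} = 0" for K
    proof -
      have "\<not> 0 < measure \<gamma> {x \<in> space \<gamma>. \<bar>f x\<bar> \<le> real K}" using that[of K] nt by blast
      then show ?thesis using measure_nonneg[of \<gamma> "{x \<in> space \<gamma>. \<bar>f x\<bar> \<le> real K}"] by linarith
    qed
    have "emeasure \<gamma> (\<Union>K. {x \<in> space \<gamma>. \<bar>f x\<bar> \<le> real K}) = 0"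
    proof (rule emeasure_UN_eq_0)
      show "emeasure \<gamma> {x \<in> space \<gamma>. \<bar>f x\<bar> \<le> real K} = 0" for K
        using z[of K] by (simp add: emeasure_eq_measure)
    qed auto
    moreover have "(\<Union>K. {x \<in> space \<gamma>. \<bar>f x\<bar> \<le> real K}) = space \<gamma>"
      using real_arch_simple by auto
    ultimately show False using emeasure_space_1 by simp
  qed
  define A where "A = {x \<in> space \<gamma>. \<bar>f x\<bar> \<le> real K}"
  have Am: "A \<in> sets \<gamma>" unfolding A_def by measurable
  define pa where "pa = measure \<gamma> A"
  have pa0: "pa > 0" using pA by (simp add: pa_def A_def)
  have pa1: "pa \<le> 1" by (simp add: pa_def)
  have lower: "pa * exp (- (\<bar>l\<bar> * real K) - l * c n) \<le> exp (\<alpha> * l\<^sup>2 / 4)" if "K \<le> n" for l n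
  proof -
    have "pa * exp (- (\<bar>l\<bar> * real K) - l * c n) = (\<integral>x. indicator A x * exp (- (\<bar>l\<bar> * real K) - l * c n) \<partial>\<gamma>)"
      using Am by (simp add: pa_def Int_absorb2 sets.sets_into_space)
    also have "\<dots> \<le> (\<integral>x. exp (l * (T n x - c n)) \<partial>\<gamma>)"
    proof (rule integral_mono)
      show "integrable \<gamma> (\<lambda>x. indicator A x * exp (- (\<bar>l\<bar> * real K) - l * c n))"
        using Am by (intro integrable_mult_left) (simp add: emeasure_eq_measure)
      have "integrable \<gamma> (\<lambda>x. exp (- (l * c n)) * exp (l * T n x))"
        by (rule integrable_mult_right[OF Tint])
      then show "integrable \<gamma> (\<lambda>x. exp (l * (T n x - c n)))"
        by (rule Bochner_Integration.integrable_cong[THEN iffD1, rotated 2])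
           (simp_all add: right_diff_distrib exp_diff exp_minus field_simps)
      fix x assume "x \<in> space \<gamma>"
      show "indicator A x * exp (- (\<bar>l\<bar> * real K) - l * c n) \<le> exp (l * (T n x - c n))"
      proof (cases "x \<in> A")
        case True
        then have "\<bar>f x\<bar> \<le> real K" by (simp add: A_def)
        then have "T n x = f x" using that by (simp add: T_def)
        then have "- (\<bar>l\<bar> * real K) - l * c n \<le> l * (T n x - c n)"
          using mul_le_absB[OF \<open>\<bar>f x\<bar> \<le> real K\<close>, of "-l"] by (simp add: algebra_simps)
        then show ?thesis using True by simp
      qed simp
    qed
    also have "\<dots> \<le> exp (\<alpha> * l\<^sup>2 / 4)" by (rule bndB)
    finally show ?thesis .
  qed
  define Cb where "Cb = real K + \<alpha> / 4 - ln pa"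
  have lnpa: "ln pa \<le> 0" using pa0 pa1 by simp
  have cb: "\<bar>c n\<bar> \<le> Cb" for n
  proof (cases "K \<le> n")
    case True
    have "pa * exp (- (real K) - c n) \<le> exp (\<alpha> / 4)" using lower[OF True, of 1] by simp
    then have "ln (pa * exp (- (real K) - c n)) \<le> \<alpha> / 4" using pa0 by (metis exp_gt_zero ln_exp ln_le_cancel_iff mult_pos_pos)
    then have 1: "ln pa - real K - c n \<le> \<alpha> / 4" using pa0 by (simp add: ln_mult)
    have "pa * exp (- (real K) + c n) \<le> exp (\<alpha> / 4)" using lower[OF True, of "-1"] by simp
    then have "ln (pa * exp (- (real K) + c n)) \<le> \<alpha> / 4" using pa0 by (metis exp_gt_zero ln_exp ln_le_cancel_iff mult_pos_pos)
    then have 2: "ln pa - real K + c n \<le> \<alpha> / 4" using pa0 by (simp add: ln_mult)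
    show ?thesis using 1 2 by (simp add: Cb_def abs_le_iff)
  next
    case False
    have "\<bar>c n\<bar> \<le> (\<integral>x. real n \<partial>\<gamma>)"
      unfolding c_def
    proof -
      have "\<bar>\<integral>x. T n x \<partial>\<gamma>\<bar> \<le> (\<integral>x. norm (T n x) \<partial>\<gamma>)"
        using integral_norm_bound[of \<gamma> "T n"] by (simp only: real_norm_def)
      also have "\<dots> \<le> (\<integral>x. real n \<partial>\<gamma>)"
      proof (rule integral_mono)
        show "integrable \<gamma> (\<lambda>x. norm (T n x))"
          by (rule integrable_const_bound[where B="real n"]) (use TB in auto)
      qed (use TB in auto)
      finally show "\<bar>\<integral>x. T n x \<partial>\<gamma>\<bar> \<le> (\<integral>x. real n \<partial>\<gamma>)" .
    qed
    then have "\<bar>c n\<bar> \<le> real n" by (simp add: prob_space)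
    then show ?thesis using False lnpa a0 by (simp add: Cb_def)
  qed
  have "bounded (range c)" unfolding bounded_iff using cb by auto
  then obtain c0 r where r: "strict_mono r" and cr: "(c \<circ> r) \<longlonglongrightarrow> c0"
    using bounded_imp_convergent_subsequence by blast
  show ?thesis
  proof (intro exI allI)
    fix l :: real
    define u where "u k x = ennreal (exp (l * (T (r k) x - c (r k))))" for k x
    have um: "u k \<in> borel_measurable \<gamma>" for k unfolding u_def by measurable
    have ulim: "(\<lambda>k. u k x) \<longlonglongrightarrow> ennreal (exp (l * (f x - c0)))" for x
    proof -
      have ev: "\<forall>\<^sub>F k in sequentially. u k x = ennreal (exp (l * (f x - (c \<circ> r) k)))"
      proof -
        obtain N :: nat where N: "\<bar>f x\<bar> \<le> real N" using real_arch_simple by blast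
        show ?thesis unfolding eventually_sequentially
        proof (intro exI allI impI)
          fix k assume "N \<le> k"
          then have "N \<le> r k" using seq_suble[OF r, of k] by simp
          then have "T (r k) x = f x" using N by (simp add: T_def)
          then show "u k x = ennreal (exp (l * (f x - (c \<circ> r) k)))" by (simp add: u_def)
        qed
      qed
      have "(\<lambda>k. ennreal (exp (l * (f x - (c \<circ> r) k)))) \<longlonglongrightarrow> ennreal (exp (l * (f x - c0)))"
        by (intro tendsto_intros cr)
      then show ?thesis using tendsto_cong[OF ev] by simp
    qed
    have "(\<integral>\<^sup>+x. ennreal (exp (l * (f x - c0))) \<partial>\<gamma>) = (\<integral>\<^sup>+x. liminf (\<lambda>k. u k x) \<partial>\<gamma>)"
    proof (rule nn_integral_cong)
      fix x
      have "liminf (\<lambda>k. u k x) = ennreal (exp (l * (f x - c0)))"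
        by (rule lim_imp_Liminf[OF _ ulim]) simp
      then show "ennreal (exp (l * (f x - c0))) = liminf (\<lambda>k. u k x)" by simp
    qed
    also have "\<dots> \<le> liminf (\<lambda>k. integral\<^sup>N \<gamma> (u k))" by (rule nn_integral_liminf[OF um])
    also have "\<dots> \<le> limsup (\<lambda>k. integral\<^sup>N \<gamma> (u k))" by (rule Liminf_le_Limsup) simp
    also have "\<dots> \<le> ennreal (exp (\<alpha> * l\<^sup>2 / 4))"
    proof (rule Limsup_bounded, rule always_eventually, rule allI)
      fix k
      have ueq: "u k = (\<lambda>x. ennreal (exp (l * (T (r k) x - c (r k)))))" by (rule ext) (simp add: u_def)
      show "integral\<^sup>N \<gamma> (u k) \<le> ennreal (exp (\<alpha> * l\<^sup>2 / 4))"
        unfolding ueq by (rule bndN)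
    qed
    finally show "(\<integral>\<^sup>+x. ennreal (exp (l * (f x - c0))) \<partial>\<gamma>) \<le> ennreal (exp (\<alpha> * l\<^sup>2 / 4))" .
  qed
qed

lemma tail_upper:
  fixes P :: "'b measure" and X :: "nat \<Rightarrow> 'b \<Rightarrow> real" and M :: nat
  assumes P: "prob_space P" and M1: "M \<ge> 1"
    and indep: "prob_space.indep_vars P (\<lambda>_. borel) X {1..M}"
    and mgf: "\<And>k l. k \<in> {1..M} \<Longrightarrow> (\<integral>\<^sup>+\<omega>. ennreal (exp (l * (X k \<omega> - c))) \<partial>P) \<le> ennreal (\<kappa> * exp (\<alpha> * l\<^sup>2 / 4))"
    and k1: "\<kappa> \<ge> 1" and a: "\<alpha> > 0" and r: "r > 0" and s: "s = sqrt (\<alpha> * ln \<kappa>)"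
    and ce: "c - e \<le> s"
  shows "measure P {\<omega> \<in> space P. (1 / real M) * (\<Sum>k=1..M. X k \<omega>) - e \<ge> r + 2 * s} \<le> exp (- real M * r\<^sup>2 / \<alpha>)"
proof -
  interpret prob_space P by (rule P)
  have Xm[measurable]: "X k \<in> borel_measurable P" if "k \<in> {1..M}" for k
    using indep that unfolding indep_vars_def by auto
  have aln: "\<alpha> * ln \<kappa> \<ge> 0" using a k1 by simp
  have s0: "s \<ge> 0" using s aln by simp
  have s2: "s\<^sup>2 = \<alpha> * ln \<kappa>" using s aln by simp
  define t where "t = r + s"
  define lam where "lam = 2 * t / \<alpha>"
  have t0: "t > 0" using r s0 by (simp add: t_def)
  have lam0: "lam > 0" using t0 a by (simp add: lam_def)
  have Mpos: "real M > 0" using M1 by simp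
  define S where "S \<omega> = (\<Sum>k=1..M. X k \<omega> - c)" for \<omega>
  have Sm[measurable]: "S \<in> borel_measurable P" unfolding S_def by measurable
  have sub: "{\<omega> \<in> space P. (1 / real M) * (\<Sum>k=1..M. X k \<omega>) - e \<ge> r + 2 * s}
             \<subseteq> {\<omega> \<in> space P. S \<omega> \<ge> real M * t}"
  proof safe
    fix \<omega> assume "\<omega> \<in> space P" and h: "r + 2 * s \<le> 1 / real M * (\<Sum>k=1..M. X k \<omega>) - e"
    have "S \<omega> = (\<Sum>k=1..M. X k \<omega>) - real M * c" by (simp add: S_def sum_subtractf)
    moreover have "(\<Sum>k=1..M. X k \<omega>) \<ge> real M * (r + 2 * s + e)"
      using h Mpos by (simp add: field_simps)
    moreover have "real M * (r + s + c) \<le> real M * (r + 2 * s + e)"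
      using ce by (intro mult_left_mono) auto
    ultimately show "S \<omega> \<ge> real M * t"
      unfolding t_def distrib_left by linarith
  qed
  have "emeasure P {\<omega> \<in> space P. S \<omega> \<ge> real M * t}
        \<le> ennreal (exp (- lam * (real M * t))) * (\<integral>\<^sup>+\<omega>. ennreal (exp (lam * S \<omega>)) * indicator (space P) \<omega> \<partial>P)"
    by (rule Chernoff_ineq_nn_integral_ge[OF lam0]) auto
  also have "(\<integral>\<^sup>+\<omega>. ennreal (exp (lam * S \<omega>)) * indicator (space P) \<omega> \<partial>P)
             = (\<integral>\<^sup>+\<omega>. (\<Prod>k\<in>{1..M}. ennreal (exp (lam * (X k \<omega> - c)))) \<partial>P)"
    by (intro nn_integral_cong)
       (simp_all add: S_def sum_distrib_left exp_sum prod_ennreal)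
  also have "\<dots> = (\<Prod>k\<in>{1..M}. \<integral>\<^sup>+\<omega>. ennreal (exp (lam * (X k \<omega> - c))) \<partial>P)"
    by (intro indep_vars_nn_integral indep_vars_compose2[OF indep]) auto
  also have "\<dots> \<le> (\<Prod>k\<in>{1..M}. ennreal (\<kappa> * exp (\<alpha> * lam\<^sup>2 / 4)))"
    by (intro prod_mono_ennreal mgf) auto
  also have "\<dots> = ennreal ((\<kappa> * exp (\<alpha> * lam\<^sup>2 / 4)) ^ M)"
    using k1 by (simp add: ennreal_power)
  also have "ennreal (exp (- lam * (real M * t))) * ennreal ((\<kappa> * exp (\<alpha> * lam\<^sup>2 / 4)) ^ M)
       = ennreal (exp (- lam * (real M * t)) * (\<kappa> * exp (\<alpha> * lam\<^sup>2 / 4)) ^ M)"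
    using k1 by (simp add: ennreal_mult)
  also have "exp (- lam * (real M * t)) * (\<kappa> * exp (\<alpha> * lam\<^sup>2 / 4)) ^ M
             = exp (real M * (ln \<kappa> - lam * t + \<alpha> * lam\<^sup>2 / 4))"
  proof -
    have "\<kappa> * exp (\<alpha> * lam\<^sup>2 / 4) = exp (ln \<kappa> + \<alpha> * lam\<^sup>2 / 4)" using k1 by (simp add: exp_add)
    then have "(\<kappa> * exp (\<alpha> * lam\<^sup>2 / 4)) ^ M = exp (real M * (ln \<kappa> + \<alpha> * lam\<^sup>2 / 4))"
      by (simp add: exp_of_nat_mult)
    then show ?thesis by (simp add: algebra_simps flip: exp_add)
  qed
  also have "ln \<kappa> - lam * t + \<alpha> * lam\<^sup>2 / 4 = ln \<kappa> - t\<^sup>2 / \<alpha>"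
    using a by (simp add: lam_def power2_eq_square field_simps)
  also have "exp (real M * (ln \<kappa> - t\<^sup>2 / \<alpha>)) \<le> exp (- real M * r\<^sup>2 / \<alpha>)"
  proof -
    have "t\<^sup>2 \<ge> r\<^sup>2 + s\<^sup>2" using r s0 by (simp add: t_def power2_eq_square algebra_simps)
    then have "t\<^sup>2 / \<alpha> \<ge> r\<^sup>2 / \<alpha> + ln \<kappa>" 
    proof -
      have "(r\<^sup>2 + \<alpha> * ln \<kappa>) / \<alpha> \<le> t\<^sup>2 / \<alpha>" using \<open>t\<^sup>2 \<ge> r\<^sup>2 + s\<^sup>2\<close> s2 a
        by (intro divide_right_mono) auto
      moreover have "(r\<^sup>2 + \<alpha> * ln \<kappa>) / \<alpha> = r\<^sup>2 / \<alpha> + ln \<kappa>" using a by (simp add: field_simps)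
      ultimately show ?thesis by simp
    qed
    then have "ln \<kappa> - t\<^sup>2 / \<alpha> \<le> - (r\<^sup>2 / \<alpha>)" by linarith
    then have "real M * (ln \<kappa> - t\<^sup>2 / \<alpha>) \<le> real M * (- (r\<^sup>2 / \<alpha>))" using Mpos by (intro mult_left_mono) auto
    then show ?thesis by simp
  qed
  finally have "emeasure P {\<omega> \<in> space P. S \<omega> \<ge> real M * t} \<le> ennreal (exp (- real M * r\<^sup>2 / \<alpha>))"
    by (meson mult_left_mono zero_le ennreal_leI)
  then have "measure P {\<omega> \<in> space P. S \<omega> \<ge> real M * t} \<le> exp (- real M * r\<^sup>2 / \<alpha>)"
    by (simp add: emeasure_eq_measure)
  moreover have "measure P {\<omega> \<in> space P. (1 / real M) * (\<Sum>k=1..M. X k \<omega>) - e \<ge> r + 2 * s}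
        \<le> measure P {\<omega> \<in> space P. S \<omega> \<ge> real M * t}"
    by (rule finite_measure_mono[OF sub]) measurable
  ultimately show ?thesis by linarith
qed

lemma quad_bound:
  fixes x s \<alpha> :: real
  assumes a: "\<alpha> > 0" and s0: "s \<ge> 0"
    and h: "\<And>l. l > 0 \<Longrightarrow> l * x \<le> s\<^sup>2 / \<alpha> + \<alpha> * l\<^sup>2 / 4"
  shows "x \<le> s"
proof (rule ccontr)
  assume "\<not> x \<le> s"
  then have xs: "x > s" by simp
  then have x0: "x > 0" using s0 by simp
  define l where "l = 2 * x / \<alpha>"
  have l0: "l > 0" using x0 a by (simp add: l_def)
  have e1: "l * x = 2 * (x\<^sup>2 / \<alpha>)" by (simp add: l_def power2_eq_square)
  have e2: "\<alpha> * l\<^sup>2 / 4 = x\<^sup>2 / \<alpha>"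
  proof -
    have "\<alpha> * l\<^sup>2 / 4 = \<alpha> * (4 * x\<^sup>2 / \<alpha>\<^sup>2) / 4" by (simp add: l_def power_divide power_mult_distrib)
    also have "\<dots> = x\<^sup>2 / \<alpha>" using a by (simp add: power2_eq_square)
    finally show ?thesis .
  qed
  have "2 * (x\<^sup>2 / \<alpha>) \<le> s\<^sup>2 / \<alpha> + x\<^sup>2 / \<alpha>" using h[OF l0] e1 e2 by simp
  then have "x\<^sup>2 / \<alpha> \<le> s\<^sup>2 / \<alpha>" by linarith
  then have "x\<^sup>2 \<le> s\<^sup>2" using a by (simp add: divide_le_cancel)
  then have "x \<le> s" using s0 by (rule power2_le_imp_le)
  then show False using xs by simp
qed

lemma mean_shift:
  fixes P :: "'b measure" and Z :: "'b \<Rightarrow> real"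
  assumes P: "prob_space P" and Zm: "Z \<in> borel_measurable P"
    and mgf: "\<And>l. (\<integral>\<^sup>+\<omega>. ennreal (exp (l * (Z \<omega> - c))) \<partial>P) \<le> ennreal (\<kappa> * exp (\<alpha> * l\<^sup>2 / 4))"
    and k1: "\<kappa> \<ge> 1" and a: "\<alpha> > 0"
  shows "integrable P Z" "\<bar>c - prob_space.expectation P Z\<bar> \<le> sqrt (\<alpha> * ln \<kappa>)"
proof -
  interpret prob_space P by (rule P)
  note Zm[measurable]
  have EI: "integrable P (\<lambda>\<omega>. exp (l * (Z \<omega> - c)))" for l
  proof (rule integrableI_bounded)
    have "(\<integral>\<^sup>+\<omega>. ennreal (norm (exp (l * (Z \<omega> - c)))) \<partial>P) = (\<integral>\<^sup>+\<omega>. ennreal (exp (l * (Z \<omega> - c))) \<partial>P)"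
      by simp
    also have "\<dots> \<le> ennreal (\<kappa> * exp (\<alpha> * l\<^sup>2 / 4))" by (rule mgf)
    also have "\<dots> < \<infinity>" by simp
    finally show "(\<integral>\<^sup>+\<omega>. ennreal (norm (exp (l * (Z \<omega> - c)))) \<partial>P) < \<infinity>" .
  qed measurable
  have EB: "(\<integral>\<omega>. exp (l * (Z \<omega> - c)) \<partial>P) \<le> \<kappa> * exp (\<alpha> * l\<^sup>2 / 4)" for l
  proof -
    have "ennreal (\<integral>\<omega>. exp (l * (Z \<omega> - c)) \<partial>P) = (\<integral>\<^sup>+\<omega>. ennreal (exp (l * (Z \<omega> - c))) \<partial>P)"
      by (rule nn_integral_eq_integral[OF EI, symmetric]) simp
    also have "\<dots> \<le> ennreal (\<kappa> * exp (\<alpha> * l\<^sup>2 / 4))" by (rule mgf)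
    finally show ?thesis using k1 by (simp add: ennreal_le_iff)
  qed
  have Ic: "integrable P (\<lambda>\<omega>. Z \<omega> - c)"
  proof (rule Bochner_Integration.integrable_bound)
    show "integrable P (\<lambda>\<omega>. exp (1 * (Z \<omega> - c)) + exp ((-1) * (Z \<omega> - c)))"
      by (intro Bochner_Integration.integrable_add EI)
    show "AE \<omega> in P. norm (Z \<omega> - c) \<le> norm (exp (1 * (Z \<omega> - c)) + exp ((-1) * (Z \<omega> - c)))"
    proof (intro AE_I2)
      fix \<omega>
      have "Z \<omega> - c \<le> exp (Z \<omega> - c)" using exp_ge_add_one_self[of "Z \<omega> - c"] by linarith
      moreover have "-(Z \<omega> - c) \<le> exp (-(Z \<omega> - c))" using exp_ge_add_one_self[of "-(Z \<omega> - c)"] by linarith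
      moreover have "0 < exp (Z \<omega> - c)" "0 < exp (-(Z \<omega> - c))" by auto
      ultimately show "norm (Z \<omega> - c) \<le> norm (exp (1 * (Z \<omega> - c)) + exp ((-1) * (Z \<omega> - c)))"
        by (simp add: abs_le_iff) (smt (verit) exp_gt_zero)
    qed
  qed measurable
  then have IZ: "integrable P Z"
  proof -
    have "integrable P (\<lambda>\<omega>. (Z \<omega> - c) + c)" by (intro Bochner_Integration.integrable_add Ic) simp
    then show ?thesis by simp
  qed
  then show "integrable P Z" .
  define e where "e = expectation Z"
  have key: "l * (e - c) \<le> ln \<kappa> + \<alpha> * l\<^sup>2 / 4" for l
  proof -
    define b where "b = ln \<kappa> + \<alpha> * l\<^sup>2 / 4"
    have eb: "\<kappa> * exp (\<alpha> * l\<^sup>2 / 4) = exp b" using k1 by (simp add: b_def exp_add)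
    have "(\<integral>\<omega>. l * (Z \<omega> - c) \<partial>P) = l * (\<integral>\<omega>. Z \<omega> - c \<partial>P)" by (rule integral_mult_right_zero)
    also have "(\<integral>\<omega>. Z \<omega> - c \<partial>P) = (\<integral>\<omega>. Z \<omega> \<partial>P) - (\<integral>\<omega>. c \<partial>P)"
      by (rule Bochner_Integration.integral_diff[OF IZ integrable_const])
    also have "(\<integral>\<omega>. c \<partial>P) = c" by (simp add: prob_space)
    finally have "l * (e - c) = (\<integral>\<omega>. l * (Z \<omega> - c) \<partial>P)" unfolding e_def by (metis (no_types))
    also have "\<dots> \<le> (\<integral>\<omega>. exp (- b) * exp (l * (Z \<omega> - c)) + (b - 1) \<partial>P)"
    proof (rule integral_mono)
      show "integrable P (\<lambda>\<omega>. l * (Z \<omega> - c))" by (intro integrable_mult_right Ic)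
      show "integrable P (\<lambda>\<omega>. exp (- b) * exp (l * (Z \<omega> - c)) + (b - 1))"
        by (intro Bochner_Integration.integrable_add integrable_mult_right EI) simp
      fix \<omega>
      have "1 + (l * (Z \<omega> - c) - b) \<le> exp (l * (Z \<omega> - c) - b)" by (rule exp_ge_add_one_self)
      also have "exp (l * (Z \<omega> - c) - b) = exp (- b) * exp (l * (Z \<omega> - c))" by (simp add: exp_diff exp_minus divide_inverse mult.commute)
      finally show "l * (Z \<omega> - c) \<le> exp (- b) * exp (l * (Z \<omega> - c)) + (b - 1)" by simp
    qed
    also have "\<dots> = (\<integral>\<omega>. exp (- b) * exp (l * (Z \<omega> - c)) \<partial>P) + (\<integral>\<omega>. (b - 1) \<partial>P)"
      by (rule Bochner_Integration.integral_add[OF integrable_mult_right[OF EI] integrable_const])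
    also have "(\<integral>\<omega>. (b - 1) \<partial>P) = b - 1" by (simp add: prob_space)
    also have "(\<integral>\<omega>. exp (- b) * exp (l * (Z \<omega> - c)) \<partial>P) = exp (- b) * (\<integral>\<omega>. exp (l * (Z \<omega> - c)) \<partial>P)"
      by (rule integral_mult_right_zero)
    also have "exp (- b) * (\<integral>\<omega>. exp (l * (Z \<omega> - c)) \<partial>P) \<le> exp (- b) * exp b"
      using EB[of l] unfolding eb by (intro mult_left_mono) auto
    also have "exp (- b) * exp b = 1" by (simp flip: exp_add)
    finally show ?thesis by (simp add: b_def)
  qed
  define s where "s = sqrt (\<alpha> * ln \<kappa>)"
  have aln: "\<alpha> * ln \<kappa> \<ge> 0" using a k1 by simp
  have s0: "s \<ge> 0" using aln by (simp add: s_def)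
  have s2: "s\<^sup>2 / \<alpha> = ln \<kappa>" using aln a by (simp add: s_def)
  have "e - c \<le> s"
    by (rule quad_bound[OF a s0]) (use key s2 in simp)
  moreover have "c - e \<le> s"
  proof (rule quad_bound[OF a s0])
    fix l :: real assume "l > 0"
    show "l * (c - e) \<le> s\<^sup>2 / \<alpha> + \<alpha> * l\<^sup>2 / 4" using key[of "-l"] s2 by (simp add: algebra_simps)
  qed
  ultimately show "\<bar>c - expectation Z\<bar> \<le> sqrt (\<alpha> * ln \<kappa>)" by (simp add: e_def s_def abs_le_iff)
qed

theorem corollary3p1:
  fixes P :: "'b measure"
    and Y :: "nat \<Rightarrow> 'b \<Rightarrow> 'a::euclidean_space"
    and M :: nat
    and m q :: "'a \<Rightarrow> real"
    and \<alpha> \<kappa> :: real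
    and f :: "'a \<Rightarrow> real"
  assumes "prob_space P"
    and "M \<ge> 1"
    and indep: "prob_space.indep_vars P (\<lambda>_. borel) Y {1..M}"
    and law: "\<And>k. k \<in> {1..M} \<Longrightarrow> distributed P lborel (Y k) (\<lambda>x. ennreal (m x))"
    and m_nonneg: "\<And>x. m x \<ge> 0"
    and "\<alpha> > 0" and "\<kappa> \<ge> 1"
    and q_meas: "q \<in> borel_measurable lborel"
    and q_nonneg: "\<And>x. q x \<ge> 0"
    and gamma_prob: "prob_space (density lborel (\<lambda>x. ennreal (q x)))"
    and lsi: "LSI (density lborel (\<lambda>x. ennreal (q x))) \<alpha>"
    and dom: "\<And>x. m x \<le> \<kappa> * q x"
    and f_lip: "\<exists>L. L-lipschitz_on UNIV f"
    and f_grad: "grad_sup_norm f \<le> 1"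
    and "r > 0"
  shows "prob_space.prob P
           {\<omega> \<in> space P. \<bar>(1 / real M) * (\<Sum>k=1..M. f (Y k \<omega>))
                             - prob_space.expectation P (\<lambda>\<omega>. f (Y 1 \<omega>))\<bar>
                          \<ge> r + 2 * sqrt (\<alpha> * ln \<kappa>)}
         \<le> 2 * exp (- real M * r\<^sup>2 / \<alpha>)"
proof -
  interpret prob_space P by (rule assms(1))
  define \<gamma> where "\<gamma> = density lborel (\<lambda>x. ennreal (q x))"
  have sg: "sets \<gamma> = sets borel" by (simp add: \<gamma>_def)
  have a0: "\<alpha> \<ge> 0" using \<open>\<alpha> > 0\<close> by simp
  obtain L where Lf: "L-lipschitz_on UNIV f" using f_lip by blast
  have fc: "continuous_on UNIV f" using Lf by (rule lipschitz_imp_continuous)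
  have fm[measurable]: "f \<in> borel_measurable borel" by (rule borel_measurable_continuous_onI[OF fc])
  have gme: "(\<lambda>x. ereal (norm (grad f x))) \<in> borel_measurable lborel"
  proof (rule ccontr)
    assume "(\<lambda>x. ereal (norm (grad f x))) \<notin> borel_measurable lborel"
    then have "grad_sup_norm f = top" unfolding grad_sup_norm_def by (rule esssup_non_measurable)
    then show False using f_grad by (simp add: top_ereal_def)
  qed
  have gm: "(\<lambda>x. norm (grad f x)) \<in> borel_measurable borel"
    using gme by (simp add: borel_measurable_ereal_iff)
  have aeL: "AE x in lborel. norm (grad f x) \<le> 1"
    using esssup_AE[of "\<lambda>x. ereal (norm (grad f x))" lborel]
  proof eventually_elim
    case (elim x)
    then have "ereal (norm (grad f x)) \<le> 1" using f_grad unfolding grad_sup_norm_def by (rule order_trans)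
    then show ?case by simp
  qed
  have qm: "(\<lambda>x. ennreal (q x)) \<in> borel_measurable lborel" using q_meas by measurable
  have aeG: "AE x in \<gamma>. norm (grad f x) \<le> 1"
    unfolding \<gamma>_def AE_density[OF qm] using aeL by eventually_elim simp
  obtain c where cbound: "\<And>l. (\<integral>\<^sup>+x. ennreal (exp (l * (f x - c))) \<partial>\<gamma>) \<le> ennreal (exp (\<alpha> * l\<^sup>2 / 4))"
    using herbst_full[OF sg gamma_prob[folded \<gamma>_def] lsi[folded \<gamma>_def] a0 Lf gm aeG] by blast
  have Ym[measurable]: "Y k \<in> borel_measurable P" if "k \<in> {1..M}" for k
    using law[OF that] unfolding distributed_def by simp
  have mgfY: "(\<integral>\<^sup>+\<omega>. ennreal (exp (l * (f (Y k \<omega>) - c))) \<partial>P) \<le> ennreal (\<kappa> * exp (\<alpha> * l\<^sup>2 / 4))"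
    if k: "k \<in> {1..M}" for k l
  proof -
    define g where "g x = ennreal (exp (l * (f x - c)))" for x
    have gm[measurable]: "g \<in> borel_measurable lborel" unfolding g_def by measurable
    have "(\<integral>\<^sup>+\<omega>. ennreal (exp (l * (f (Y k \<omega>) - c))) \<partial>P) = (\<integral>\<^sup>+x. ennreal (m x) * g x \<partial>lborel)"
      using distributed_nn_integral[OF law[OF k] gm] by (simp add: g_def)
    also have "\<dots> \<le> (\<integral>\<^sup>+x. ennreal \<kappa> * (ennreal (q x) * g x) \<partial>lborel)"
    proof (rule nn_integral_mono)
      fix x
      have "ennreal (m x) \<le> ennreal (\<kappa> * q x)" using dom[of x] by (rule ennreal_leI)
      also have "\<dots> = ennreal \<kappa> * ennreal (q x)" using \<open>\<kappa> \<ge> 1\<close> q_nonneg[of x] by (simp add: ennreal_mult)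
      finally show "ennreal (m x) * g x \<le> ennreal \<kappa> * (ennreal (q x) * g x)"
        by (simp add: mult.assoc[symmetric] mult_right_mono)
    qed
    also have "\<dots> = ennreal \<kappa> * (\<integral>\<^sup>+x. ennreal (q x) * g x \<partial>lborel)"
      by (rule nn_integral_cmult, rule borel_measurable_times_ennreal[OF qm gm])
    also have "(\<integral>\<^sup>+x. ennreal (q x) * g x \<partial>lborel) = (\<integral>\<^sup>+x. g x \<partial>\<gamma>)"
      unfolding \<gamma>_def by (rule nn_integral_density[OF qm gm, symmetric])
    also have "ennreal \<kappa> * (\<integral>\<^sup>+x. g x \<partial>\<gamma>) \<le> ennreal \<kappa> * ennreal (exp (\<alpha> * l\<^sup>2 / 4))"
      using cbound[of l] unfolding g_def by (intro mult_left_mono) auto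
    also have "\<dots> = ennreal (\<kappa> * exp (\<alpha> * l\<^sup>2 / 4))" using \<open>\<kappa> \<ge> 1\<close> by (simp add: ennreal_mult)
    finally show ?thesis .
  qed
  define e where "e = expectation (\<lambda>\<omega>. f (Y 1 \<omega>))"
  define s where "s = sqrt (\<alpha> * ln \<kappa>)"
  have k1: "1 \<in> {1..M}" using \<open>M \<ge> 1\<close> by simp
  have ms: "\<bar>c - e\<bar> \<le> s"
    unfolding e_def s_def
    by (rule mean_shift(2)[OF assms(1) _ mgfY[OF k1] \<open>\<kappa> \<ge> 1\<close> \<open>\<alpha> > 0\<close>]) (use Ym[OF k1] in measurable)
  have up: "measure P {\<omega> \<in> space P. (1 / real M) * (\<Sum>k=1..M. f (Y k \<omega>)) - e \<ge> r + 2 * s} \<le> exp (- real M * r\<^sup>2 / \<alpha>)"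
  proof (rule tail_upper[OF assms(1) \<open>M \<ge> 1\<close> _ mgfY \<open>\<kappa> \<ge> 1\<close> \<open>\<alpha> > 0\<close> \<open>r > 0\<close> s_def])
    show "prob_space.indep_vars P (\<lambda>_. borel) (\<lambda>k \<omega>. f (Y k \<omega>)) {1..M}"
      using indep_vars_compose2[OF indep, of "\<lambda>k. f"] by simp
    show "c - e \<le> s" using ms by simp
  qed
  have lo: "measure P {\<omega> \<in> space P. (1 / real M) * (\<Sum>k=1..M. - f (Y k \<omega>)) - (- e) \<ge> r + 2 * s} \<le> exp (- real M * r\<^sup>2 / \<alpha>)"
  proof (rule tail_upper[OF assms(1) \<open>M \<ge> 1\<close> _ _ \<open>\<kappa> \<ge> 1\<close> \<open>\<alpha> > 0\<close> \<open>r > 0\<close> s_def])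
    show "prob_space.indep_vars P (\<lambda>_. borel) (\<lambda>k \<omega>. - f (Y k \<omega>)) {1..M}"
      using indep_vars_compose2[OF indep, of "\<lambda>k x. - f x"] by simp
    fix k l assume k: "k \<in> {1..M}"
    show "(\<integral>\<^sup>+\<omega>. ennreal (exp (l * (- f (Y k \<omega>) - - c))) \<partial>P) \<le> ennreal (\<kappa> * exp (\<alpha> * l\<^sup>2 / 4))"
      using mgfY[OF k, of "-l"] by (simp add: algebra_simps)
  next
    show "- c - - e \<le> s" using ms by simp
  qed
  have Sm[measurable]: "(\<lambda>\<omega>. \<Sum>k=1..M. f (Y k \<omega>)) \<in> borel_measurable P"
    by (rule borel_measurable_sum) (use Ym in measurable)
  let ?E = "{\<omega> \<in> space P. \<bar>(1 / real M) * (\<Sum>k=1..M. f (Y k \<omega>)) - expectation (\<lambda>\<omega>. f (Y 1 \<omega>))\<bar> \<ge> r + 2 * sqrt (\<alpha> * ln \<kappa>)}"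
  let ?U = "{\<omega> \<in> space P. (1 / real M) * (\<Sum>k=1..M. f (Y k \<omega>)) - e \<ge> r + 2 * s}"
  let ?D = "{\<omega> \<in> space P. (1 / real M) * (\<Sum>k=1..M. - f (Y k \<omega>)) - (- e) \<ge> r + 2 * s}"
  have sub: "?E \<subseteq> ?U \<union> ?D"
  proof
    fix \<omega> assume "\<omega> \<in> ?E"
    then have "\<omega> \<in> space P" and h: "\<bar>(1 / real M) * (\<Sum>k=1..M. f (Y k \<omega>)) - e\<bar> \<ge> r + 2 * s"
      by (auto simp: e_def s_def)
    moreover have "(1 / real M) * (\<Sum>k=1..M. - f (Y k \<omega>)) - (- e) = - ((1 / real M) * (\<Sum>k=1..M. f (Y k \<omega>)) - e)"
      by (simp add: sum_negf)
    moreover have "(1 / real M) * (\<Sum>k=1..M. f (Y k \<omega>)) - e \<ge> r + 2 * s \<or>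
                   - ((1 / real M) * (\<Sum>k=1..M. f (Y k \<omega>)) - e) \<ge> r + 2 * s"
      using h by linarith
    ultimately show "\<omega> \<in> ?U \<union> ?D" by (simp only: Un_iff mem_Collect_eq) metis
  qed
  have Um: "?U \<in> sets P" by measurable
  have Dm: "?D \<in> sets P" by measurable
  have "measure P ?E \<le> measure P (?U \<union> ?D)"
    by (rule finite_measure_mono[OF sub]) (use Um Dm in blast)
  also have "\<dots> \<le> measure P ?U + measure P ?D"
    by (rule measure_subadditive[OF Um Dm]) (simp_all add: emeasure_eq_measure)
  also have "\<dots> \<le> 2 * exp (- real M * r\<^sup>2 / \<alpha>)" using up lo by simp
  finally show ?thesis .
qed

end
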